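(* Let $\Phi=\{\varphi_i\}_{i\in\Lambda}$ be a similarity IFS in $\mathbb{R}^d$ and let $F\subset\mathbb{R}^d$ be a nonempty compact set with $\varphi_iF\subseteq F$ for every $i\in\Lambda$. Then $\Phi$ is $(F,c)$-diffuse for some $c>0$ if and only if for every affine hyperplane $\mathcal{L}\subseteq\mathbb{R}^d$ there exists $i\in\Lambda$ with $\varphi_iF\cap\mathcal{L}=\emptyset$.
   Context: A similarity IFS is a finite family of contracting similarities of $\mathbb{R}^d$. $\Phi$ is $(F,c)$-diffuse if for every affine hyperplane $\mathcal{L}$ there is $i\in\Lambda$ with $\varphi_iF\cap\mathcal{L}^{(c)}=\emptyset$, $\mathcal{L}^{(c)}$ denoting the open $c$-neighborhood of $\mathcal{L}$. *)

theory Defs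
  imports "HOL-Analysis.Analysis"
begin

definition similarity_with_ratio :: "('a::euclidean_space \<Rightarrow> 'a) \<Rightarrow> real \<Rightarrow> bool" where
  "similarity_with_ratio f r \<longleftrightarrow> (\<forall>x y. dist (f x) (f y) = r * dist x y)"

definition contracting_similarity :: "('a::euclidean_space \<Rightarrow> 'a) \<Rightarrow> bool" where
  "contracting_similarity f \<longleftrightarrow> (\<exists>r. 0 < r \<and> r < 1 \<and> similarity_with_ratio f r)"

definition similarity_IFS :: "'i set \<Rightarrow> ('i \<Rightarrow> 'a::euclidean_space \<Rightarrow> 'a) \<Rightarrow> bool" where
  "similarity_IFS \<Lambda> \<phi> \<longleftrightarrow> finite \<Lambda> \<and> \<Lambda> \<noteq> {} \<and> (\<forall>i\<in>\<Lambda>. contracting_similarity (\<phi> i))"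

definition affine_hyperplane :: "'a::euclidean_space set \<Rightarrow> bool" where
  "affine_hyperplane L \<longleftrightarrow> (\<exists>a b. a \<noteq> 0 \<and> L = {x. a \<bullet> x = b})"

definition open_nbhd :: "'a::euclidean_space set \<Rightarrow> real \<Rightarrow> 'a set" where
  "open_nbhd L c = {x. \<exists>y\<in>L. dist x y < c}"

definition diffuse :: "'i set \<Rightarrow> ('i \<Rightarrow> 'a::euclidean_space \<Rightarrow> 'a) \<Rightarrow> 'a set \<Rightarrow> real \<Rightarrow> bool" where
  "diffuse \<Lambda> \<phi> F c \<longleftrightarrow>
     (\<forall>L. affine_hyperplane L \<longrightarrow> (\<exists>i\<in>\<Lambda>. \<phi> i ` F \<inter> open_nbhd L c = {}))"

end

theory Submission
  imports Defs
begin

lemma sim_cont: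
  assumes "contracting_similarity f"
  shows "continuous_on S f"
proof -
  obtain r where r: "0 < r" "\<forall>x y. dist (f x) (f y) = r * dist x y"
    using assms unfolding contracting_similarity_def similarity_with_ratio_def by blast
  show ?thesis
  proof (rule continuous_on_iff[THEN iffD2], intro ballI allI impI)
    fix x e assume "x \<in> S" "(0::real) < e"
    show "\<exists>d>0. \<forall>x'\<in>S. dist x' x < d \<longrightarrow> dist (f x') (f x) < e"
      using r \<open>0 < e\<close> by (intro exI[of _ "e / r"]) (auto simp: field_simps mult.commute)
  qed
qed

lemma normalize_hp:
  fixes a :: "'a::euclidean_space"
  assumes "a \<noteq> 0" "a \<bullet> y = b" "dist x y < c"
  shows "\<bar>(a /\<^sub>R norm a) \<bullet> x - b / norm a\<bar> < c"
proof -
  have "(a /\<^sub>R norm a) \<bullet> x - b / norm a = (a /\<^sub>R norm a) \<bullet> (x - y)"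
    using assms(2) by (simp add: inner_diff_right divide_simps)
  also have "\<bar>\<dots>\<bar> \<le> norm (a /\<^sub>R norm a) * norm (x - y)"
    by (rule Cauchy_Schwarz_ineq2)
  also have "\<dots> = norm (x - y)" using assms(1) by simp
  also have "\<dots> < c" using assms(3) by (simp add: dist_norm)
  finally show ?thesis .
qed

theorem proposition3p10:
  fixes \<Lambda> :: "'i set" and \<phi> :: "'i \<Rightarrow> 'a::euclidean_space \<Rightarrow> 'a" and F :: "'a set"
  assumes "similarity_IFS \<Lambda> \<phi>"
    and "compact F" and "F \<noteq> {}"
    and "\<forall>i\<in>\<Lambda>. \<phi> i ` F \<subseteq> F"
  shows "(\<exists>c>0. diffuse \<Lambda> \<phi> F c) \<longleftrightarrow>
         (\<forall>L. affine_hyperplane L \<longrightarrow> (\<exists>i\<in>\<Lambda>. \<phi> i ` F \<inter> L = {}))"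
proof
  assume "\<exists>c>0. diffuse \<Lambda> \<phi> F c"
  then obtain c where c: "c > 0" "diffuse \<Lambda> \<phi> F c" by blast
  show "\<forall>L. affine_hyperplane L \<longrightarrow> (\<exists>i\<in>\<Lambda>. \<phi> i ` F \<inter> L = {})"
  proof (intro allI impI)
    fix L :: "'a set" assume "affine_hyperplane L"
    then obtain i where i: "i \<in> \<Lambda>" "\<phi> i ` F \<inter> open_nbhd L c = {}"
      using c unfolding diffuse_def by blast
    have "L \<subseteq> open_nbhd L c" using c(1) unfolding open_nbhd_def by force
    then show "\<exists>i\<in>\<Lambda>. \<phi> i ` F \<inter> L = {}" using i by blast
  qed
next
  assume H: "\<forall>L. affine_hyperplane L \<longrightarrow> (\<exists>i\<in>\<Lambda>. \<phi> i ` F \<inter> L = {})"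
  show "\<exists>c>0. diffuse \<Lambda> \<phi> F c"
  proof (rule ccontr)
    assume nd: "\<not> (\<exists>c>0. diffuse \<Lambda> \<phi> F c)"
    have fin: "finite \<Lambda>" "\<Lambda> \<noteq> {}" and cs: "\<forall>i\<in>\<Lambda>. contracting_similarity (\<phi> i)"
      using assms(1) unfolding similarity_IFS_def by auto
    obtain R where R: "\<forall>x\<in>F. norm x \<le> R"
      using compact_imp_bounded[OF assms(2)] bounded_iff by blast
    have "\<forall>n. \<exists>a b X. norm a = 1 \<and> (\<forall>i\<in>\<Lambda>. X i \<in> \<phi> i ` F \<and> \<bar>a \<bullet> X i - b\<bar> < 1 / Suc n)"
    proof
      fix n
      have "\<not> diffuse \<Lambda> \<phi> F (1 / Suc n)" using nd by auto
      then obtain L :: "'a set" where L: "affine_hyperplane L"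
        "\<forall>i\<in>\<Lambda>. \<phi> i ` F \<inter> open_nbhd L (1 / Suc n) \<noteq> {}"
        unfolding diffuse_def by blast
      then obtain a b where ab: "a \<noteq> 0" "L = {x. a \<bullet> x = b}"
        unfolding affine_hyperplane_def by blast
      have "\<forall>i\<in>\<Lambda>. \<exists>x. x \<in> \<phi> i ` F \<and> \<bar>(a /\<^sub>R norm a) \<bullet> x - b / norm a\<bar> < 1 / Suc n"
      proof
        fix i assume "i \<in> \<Lambda>"
        then obtain x y where "x \<in> \<phi> i ` F" "a \<bullet> y = b" "dist x y < 1 / Suc n"
          using L(2) ab(2) unfolding open_nbhd_def by blast
        then show "\<exists>x. x \<in> \<phi> i ` F \<and> \<bar>(a /\<^sub>R norm a) \<bullet> x - b / norm a\<bar> < 1 / Suc n"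
          using normalize_hp[OF ab(1)] by blast
      qed
      then obtain X where "\<forall>i\<in>\<Lambda>. X i \<in> \<phi> i ` F \<and> \<bar>(a /\<^sub>R norm a) \<bullet> X i - b / norm a\<bar> < 1 / Suc n"
        by metis
      then show "\<exists>a b X. norm a = 1 \<and> (\<forall>i\<in>\<Lambda>. X i \<in> \<phi> i ` F \<and> \<bar>a \<bullet> X i - b\<bar> < 1 / Suc n)"
        using ab(1) by (intro exI[of _ "a /\<^sub>R norm a"] exI[of _ "b / norm a"] exI[of _ X]) simp
    qed
    then obtain A B X where AB: "\<And>n. norm (A n) = 1"
      "\<And>n i. i \<in> \<Lambda> \<Longrightarrow> X n i \<in> \<phi> i ` F \<and> \<bar>A n \<bullet> X n i - B n\<bar> < 1 / Suc n"
      by metis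
    obtain i0 where i0: "i0 \<in> \<Lambda>" using fin by blast
    have XF: "X n i \<in> F" if "i \<in> \<Lambda>" for n i using AB(2)[OF that] assms(4) that by blast
    have Bb: "\<bar>B n\<bar> \<le> R + 1" for n
    proof -
      have "\<bar>A n \<bullet> X n i0\<bar> \<le> norm (A n) * norm (X n i0)" by (rule Cauchy_Schwarz_ineq2)
      also have "\<dots> \<le> R" using AB(1) R XF[OF i0] by simp
      finally have "\<bar>A n \<bullet> X n i0\<bar> \<le> R" .
      moreover have "\<bar>A n \<bullet> X n i0 - B n\<bar> < 1 / Suc n" using AB(2)[OF i0] by blast
      moreover have "1 / real (Suc n) \<le> 1" by (simp add: divide_simps)
      ultimately show ?thesis by linarith
    qed
    have K: "compact (sphere (0::'a) 1 \<times> cball (0::real) (R + 1))"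
      by (intro compact_Times compact_sphere compact_cball)
    have "\<forall>n. (A n, B n) \<in> sphere (0::'a) 1 \<times> cball (0::real) (R + 1)"
      using AB(1) Bb by (simp add: dist_norm)
    then obtain l r where l: "l \<in> sphere (0::'a) 1 \<times> cball (0::real) (R + 1)"
      and r: "strict_mono r" "((\<lambda>n. (A n, B n)) \<circ> r) \<longlonglongrightarrow> l"
      using K unfolding compact_def by meson
    obtain a b where lab: "l = (a, b)" by (cases l)
    have a1: "norm a = 1" using l lab by simp
    have Ar: "(\<lambda>n. A (r n)) \<longlonglongrightarrow> a" using tendsto_fst[OF r(2)] lab by (simp add: o_def)
    have Br: "(\<lambda>n. B (r n)) \<longlonglongrightarrow> b" using tendsto_snd[OF r(2)] lab by (simp add: o_def)
    have "affine_hyperplane {x. a \<bullet> x = b}"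
      unfolding affine_hyperplane_def using a1 by (intro exI[of _ a] exI[of _ b]) auto
    then obtain i where i: "i \<in> \<Lambda>" "\<phi> i ` F \<inter> {x. a \<bullet> x = b} = {}" using H by blast
    have Ki: "compact (\<phi> i ` F)"
      using compact_continuous_image[OF sim_cont assms(2)] cs i(1) by blast
    have "\<forall>n. X (r n) i \<in> \<phi> i ` F" using AB(2)[OF i(1)] by blast
    then obtain x s where x: "x \<in> \<phi> i ` F" and s: "strict_mono s"
      "((\<lambda>n. X (r n) i) \<circ> s) \<longlonglongrightarrow> x"
      using Ki unfolding compact_def by meson
    have Xs: "(\<lambda>n. X (r (s n)) i) \<longlonglongrightarrow> x" using s(2) by (simp add: o_def)
    have As: "(\<lambda>n. A (r (s n))) \<longlonglongrightarrow> a"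
      using LIMSEQ_subseq_LIMSEQ[OF Ar s(1)] by (simp add: o_def)
    have Bs: "(\<lambda>n. B (r (s n))) \<longlonglongrightarrow> b"
      using LIMSEQ_subseq_LIMSEQ[OF Br s(1)] by (simp add: o_def)
    have lim1: "(\<lambda>n. A (r (s n)) \<bullet> X (r (s n)) i - B (r (s n))) \<longlonglongrightarrow> a \<bullet> x - b"
      by (intro tendsto_intros As Xs Bs)
    have rs: "strict_mono (r \<circ> s)" using r(1) s(1) by (rule strict_mono_o)
    have lim0: "(\<lambda>n. 1 / real (Suc (r (s n)))) \<longlonglongrightarrow> 0"
    proof -
      have "(\<lambda>n. 1 / real (Suc n)) \<longlonglongrightarrow> 0" using LIMSEQ_inverse_real_of_nat by (simp add: inverse_eq_divide)
      then show ?thesis using LIMSEQ_subseq_LIMSEQ[OF _ rs] by (simp add: o_def)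
    qed
    have "(\<lambda>n. A (r (s n)) \<bullet> X (r (s n)) i - B (r (s n))) \<longlonglongrightarrow> 0"
    proof (rule Lim_null_comparison[OF _ lim0])
      show "\<forall>\<^sub>F n in sequentially. norm (A (r (s n)) \<bullet> X (r (s n)) i - B (r (s n))) \<le> 1 / real (Suc (r (s n)))"
        using AB(2)[OF i(1)] by (intro always_eventually allI) (simp add: less_imp_le)
    qed
    then have "a \<bullet> x - b = 0" using lim1 LIMSEQ_unique by blast
    then show False using i(2) x by auto
  qed
qed

end
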